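(* Let $\mathcal{A}$ be a deterministic learning algorithm and consider the passive unlearning mechanism $\bar{\mathcal{A}}(U,\mathcal{A}(R\cup U),T(R\cup U))=\mathcal{A}(R\cup U)+\nu$ with $\nu\sim\mathcal{N}(0,\sigma^2 I_d)$ drawn independently at each call, where $\sigma$ may depend on the available information $(U,R\cup U)$ or $(\emptyset,R)$. If $\sigma=\sigma(R)=\frac{\mathrm{RS}_{\mathcal{A}}(R)}{\varepsilon}\sqrt{2\log(1.25/\delta)}$, computed from the retained set $R$, then $(\mathcal{A},\bar{\mathcal{A}})$ satisfies $(\varepsilon,\delta)$-unlearning for every $\varepsilon,\delta\in(0,1)$.
   Context: Datasets are finite subsets of a domain $\mathcal{Z}$; $\mathcal{A}$ maps datasets to $\mathcal{W}\subseteq\mathbb{R}^d$ with Euclidean norm. $\mathrm{RS}_{\mathcal{A}}(R)=\max_{Z\subseteq\mathcal{Z},|Z|=1}\|\mathcal{A}(R\cup Z)-\mathcal{A}(R)\|$. Two random variables $X,Y$ are $(\varepsilon,\delta)$-indistinguishable if for all measurable $W$, $P(X\in W)\le e^\varepsilon P(Y\in W)+\delta$ and symmetrically. The pair $(\mathcal{A},\bar{\mathcal{A}})$ satisfies $(\varepsilon,\delta)$-unlearning if for every dataset $R$ of size $n$ and every forget set $U$ with $|U\cup R|\le n+1$, $\bar{\mathcal{A}}(U,\mathcal{A}(R\cup U),T(R\cup U))$ and $\bar{\mathcal{A}}(\emptyset,\mathcal{A}(R),T(R))$ are $(\varepsilon,\delta)$-indistinguishable; here $T(S)=S$ is full side information.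 *)

theory Defs
  imports "HOL-Probability.Probability"
begin

definition gauss_measure :: "'a::euclidean_space \<Rightarrow> real \<Rightarrow> 'a measure" where
  "gauss_measure c \<sigma> =
     (if \<sigma> = 0 then return borel c
      else density lborel (\<lambda>x. ennreal ((2 * pi * \<sigma>\<^sup>2) powr (- real DIM('a) / 2)
                                       * exp (- (norm (x - c))\<^sup>2 / (2 * \<sigma>\<^sup>2)))))"

definition RS :: "('z set \<Rightarrow> 'a::real_normed_vector) \<Rightarrow> 'z set \<Rightarrow> real" where
  "RS A R = (SUP z. norm (A (R \<union> {z}) - A R))"

definition indist :: "real \<Rightarrow> real \<Rightarrow> 'a measure \<Rightarrow> 'a measure \<Rightarrow> bool" where
  "indist \<epsilon> \<delta> M N \<longleftrightarrow>
     (\<forall>W \<in> sets M. measure M W \<le> exp \<epsilon> * measure N W + \<delta>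
                  \<and> measure N W \<le> exp \<epsilon> * measure M W + \<delta>)"

text \<open>(eps,delta)-unlearning with full side information T(S) = S.  The unlearning
  mechanism takes (forget set U, trained model, side information) and returns the
  output distribution.  R is the retained set, U the forget set (disjoint from R).\<close>
definition unlearning ::
  "('z set \<Rightarrow> 'a) \<Rightarrow> ('z set \<Rightarrow> 'a \<Rightarrow> 'z set \<Rightarrow> 'a measure) \<Rightarrow> real \<Rightarrow> real \<Rightarrow> nat \<Rightarrow> bool" where
  "unlearning A Abar \<epsilon> \<delta> n \<longleftrightarrow>
     (\<forall>R U. finite R \<and> card R = n \<and> finite U \<and> R \<inter> U = {} \<and> card (U \<union> R) \<le> n + 1 \<longrightarrow>
        indist \<epsilon> \<delta> (Abar U (A (R \<union> U)) (R \<union> U)) (Abar {} (A R) R))"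

end

theory Submission
  imports Defs
begin

definition gd :: "'a::euclidean_space \<Rightarrow> real \<Rightarrow> 'a \<Rightarrow> real" where
  "gd c \<sigma> x = (2 * pi * \<sigma>\<^sup>2) powr (- real DIM('a) / 2) * exp (- (norm (x - c))\<^sup>2 / (2 * \<sigma>\<^sup>2))"

lemma gd_prod:
  assumes "\<sigma> > 0"
  shows "gd c \<sigma> x = (\<Prod>b\<in>Basis. normal_density (c \<bullet> b) \<sigma> (x \<bullet> b))"
proof -
  have n: "(norm (x - c))\<^sup>2 = (\<Sum>b\<in>Basis. (x \<bullet> b - c \<bullet> b)\<^sup>2)"
  proof -
    have "(norm (x - c))\<^sup>2 = (x - c) \<bullet> (x - c)" by (simp add: power2_norm_eq_inner)
    also have "\<dots> = (\<Sum>b\<in>Basis. ((x - c) \<bullet> b) * ((x - c) \<bullet> b))" by (rule euclidean_inner)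
    finally show ?thesis by (simp add: inner_diff_left power2_eq_square)
  qed
  have "(\<Prod>b\<in>Basis. normal_density (c \<bullet> b) \<sigma> (x \<bullet> b))
     = (\<Prod>b\<in>(Basis::'a set). 1 / sqrt (2 * pi * \<sigma>\<^sup>2)) * (\<Prod>b\<in>Basis. exp (-(x \<bullet> b - c \<bullet> b)\<^sup>2/ (2 * \<sigma>\<^sup>2)))"
    unfolding normal_density_def prod.distrib ..
  also have "(\<Prod>b\<in>(Basis::'a set). 1 / sqrt (2 * pi * \<sigma>\<^sup>2)) = (2 * pi * \<sigma>\<^sup>2) powr (- real DIM('a) / 2)"
  proof -
    have p: "2 * pi * \<sigma>\<^sup>2 > 0" using assms by simp
    have "(\<Prod>b\<in>(Basis::'a set). 1 / sqrt (2 * pi * \<sigma>\<^sup>2)) = ((2 * pi * \<sigma>\<^sup>2) powr (-1/2)) ^ DIM('a)"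
      using p by (simp add: powr_minus_divide powr_half_sqrt)
    also have "\<dots> = (2 * pi * \<sigma>\<^sup>2) powr (- real DIM('a) / 2)"
    proof -
      have "((2 * pi * \<sigma>\<^sup>2) powr (-1/2)) ^ DIM('a) = ((2 * pi * \<sigma>\<^sup>2) powr (-1/2)) powr real DIM('a)"
        by (rule powr_realpow[symmetric]) (use p assms in simp)
      also have "\<dots> = (2 * pi * \<sigma>\<^sup>2) powr (- real DIM('a) / 2)"
        by (simp add: powr_powr)
      finally show ?thesis .
    qed
    finally show ?thesis .
  qed
  also have "(\<Prod>b\<in>(Basis::'a set). exp (-(x \<bullet> b - c \<bullet> b)\<^sup>2/ (2 * \<sigma>\<^sup>2))) = exp (- (norm (x - c))\<^sup>2 / (2 * \<sigma>\<^sup>2))"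
    by (simp add: exp_sum[symmetric] n sum_divide_distrib[symmetric] sum_negf)
  finally show ?thesis unfolding gd_def by simp
qed

lemma gd_int:
  assumes "\<sigma> > 0"
  shows "(\<integral>\<^sup>+x. ennreal (gd c \<sigma> x) \<partial>lborel) = 1"
proof -
  have "(\<integral>\<^sup>+x. ennreal (gd c \<sigma> x) \<partial>lborel) = (\<integral>\<^sup>+x. (\<Prod>b\<in>Basis. (\<lambda>b y. ennreal (normal_density (c \<bullet> b) \<sigma> y)) b (x \<bullet> b)) \<partial>lborel)"
    using assms by (simp add: gd_prod prod_ennreal normal_density_nonneg)
  also have "\<dots> = (\<Prod>b\<in>(Basis::'a set). (\<integral>\<^sup>+y. ennreal (normal_density (c \<bullet> b) \<sigma> y) \<partial>lborel))"
    by (rule nn_integral_lborel_prod) auto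
  also have "\<dots> = 1"
    using assms by (simp add: nn_integral_eq_integral normal_density_nonneg)
  finally show ?thesis .
qed

lemma pt_ineq:
  fixes A B \<epsilon> l :: real
  assumes "l > 0"
  shows "exp (-A) \<le> exp \<epsilon> * exp (-B) + 1/(1+l) * exp (- l * \<epsilon>) * exp (-(1+l)*A + l*B)"
proof (cases "B - A - \<epsilon> \<le> 0")
  case True
  then have "exp (-A) \<le> exp \<epsilon> * exp (-B)" by (simp add: exp_add[symmetric])
  moreover have "0 \<le> 1/(1+l) * exp (- l * \<epsilon>) * exp (-(1+l)*A + l*B)" using assms by simp
  ultimately show ?thesis by linarith
next
  case False
  define y where "y = B - A - \<epsilon>"
  have y: "y > 0" using False y_def by simp
  have e1: "1 - exp (-y) \<le> y" using exp_ge_add_one_self[of "-y"] by simp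
  have e2: "1 - exp (-y) \<le> 1" by simp
  have e3: "1 + l * y \<le> exp (l * y)" using exp_ge_add_one_self[of "l*y"] by simp
  have "(1 + l) * (1 - exp (-y)) \<le> 1 + l * y"
  proof (cases "y \<le> 1")
    case True
    have "(1 + l) * (1 - exp (-y)) \<le> (1 + l) * y" using e1 assms by (intro mult_left_mono) auto
    moreover have "(1 + l) * y = y + l * y" by (simp add: algebra_simps)
    ultimately show ?thesis using True by linarith
  next
    case False
    have "(1 + l) * (1 - exp (-y)) \<le> (1 + l) * 1" using e2 assms by (intro mult_left_mono) auto
    moreover have "l * 1 \<le> l * y" using False assms by (intro mult_left_mono) auto
    ultimately show ?thesis by simp
  qed
  then have "(1 + l) * (1 - exp (-y)) \<le> exp (l * y)" using e3 by linarith
  then have key: "1 - exp (-y) \<le> 1/(1+l) * exp (l * y)" using assms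
    by (simp add: pos_le_divide_eq mult.commute)
  have h1: "exp (-A) * exp (-y) = exp \<epsilon> * exp (-B)"
    unfolding mult_exp_exp by (simp add: y_def)
  have "exp (-A) = exp \<epsilon> * exp (-B) + exp (-A) * (1 - exp (-y))"
    using h1 by (simp add: right_diff_distrib)
  also have "\<dots> \<le> exp \<epsilon> * exp (-B) + exp (-A) * (1/(1+l) * exp (l * y))"
    using key by (intro add_left_mono mult_left_mono) auto
  also have "exp (-A) * (1/(1+l) * exp (l * y)) = 1/(1+l) * exp (- l * \<epsilon>) * exp (-(1+l)*A + l*B)"
  proof -
    have "exp (-A) * exp (l * y) = exp (- l * \<epsilon>) * exp (-(1+l)*A + l*B)"
      unfolding mult_exp_exp by (simp add: y_def algebra_simps)
    then show ?thesis by (metis mult.assoc mult.commute)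
  qed
  finally show ?thesis .
qed


lemma quad_id:
  fixes x a b :: "'a::real_inner"
  shows "(1+l) * (norm (x - a))\<^sup>2 - l * (norm (x - b))\<^sup>2
       = (norm (x - ((1+l) *\<^sub>R a - l *\<^sub>R b)))\<^sup>2 - l * (1+l) * (norm (a - b))\<^sup>2"
proof -
  have c1: "a \<bullet> x = x \<bullet> a" "b \<bullet> x = x \<bullet> b" "b \<bullet> a = a \<bullet> b" by (simp_all add: inner_commute)
  have e1: "(norm (x - a))\<^sup>2 = x \<bullet> x - 2 * (x \<bullet> a) + a \<bullet> a"
    unfolding power2_norm_eq_inner by (simp add: inner_diff_left inner_diff_right c1)
  have e2: "(norm (x - b))\<^sup>2 = x \<bullet> x - 2 * (x \<bullet> b) + b \<bullet> b"
    unfolding power2_norm_eq_inner by (simp add: inner_diff_left inner_diff_right c1)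
  have e3: "(norm (a - b))\<^sup>2 = a \<bullet> a - 2 * (a \<bullet> b) + b \<bullet> b"
    unfolding power2_norm_eq_inner by (simp add: inner_diff_left inner_diff_right c1)
  have e4: "(norm (x - ((1+l) *\<^sub>R a - l *\<^sub>R b)))\<^sup>2 = x \<bullet> x - 2 * (1+l) * (x \<bullet> a) + 2 * l * (x \<bullet> b)
      + (1+l)^2 * (a \<bullet> a) - 2 * l * (1+l) * (a \<bullet> b) + l^2 * (b \<bullet> b)"
    unfolding power2_norm_eq_inner
    by (simp add: inner_diff_left inner_diff_right c1 power2_eq_square algebra_simps)
  show ?thesis unfolding e1 e2 e3 e4 by (simp add: power2_eq_square algebra_simps)
qed

lemma gd_meas[measurable]: "gd c \<sigma> \<in> borel_measurable borel"
  unfolding gd_def by measurable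

lemma gd_nonneg: "0 \<le> gd c \<sigma> x"
  unfolding gd_def by simp

lemma gauss_eq: "\<sigma> \<noteq> 0 \<Longrightarrow> gauss_measure c \<sigma> = density lborel (\<lambda>x. ennreal (gd c \<sigma> x))"
  by (simp add: gauss_measure_def gd_def)

lemma gauss_prob: "\<sigma> > 0 \<Longrightarrow> prob_space (gauss_measure c \<sigma>)"
  by (simp add: gauss_eq) (rule prob_spaceI, simp add: emeasure_density gd_int)

lemma mech:
  fixes a b :: "'a::euclidean_space"
  assumes sp: "\<sigma> > 0" and lp: "l > 0" and W: "W \<in> sets borel"
  shows "measure (gauss_measure a \<sigma>) W \<le> exp \<epsilon> * measure (gauss_measure b \<sigma>) W
           + 1/(1+l) * exp (l*(1+l)*(norm (a - b))\<^sup>2/(2*\<sigma>\<^sup>2) - l*\<epsilon>)"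
proof -
  define K where "K = 1/(1+l) * exp (l*(1+l)*(norm (a - b))\<^sup>2/(2*\<sigma>\<^sup>2) - l*\<epsilon>)"
  define m where "m = (1+l) *\<^sub>R a - l *\<^sub>R b"
  have K0: "K \<ge> 0" using lp by (simp add: K_def)
  have pw: "gd a \<sigma> x \<le> exp \<epsilon> * gd b \<sigma> x + K * gd m \<sigma> x" for x
  proof -
    define N where "N = (2 * pi * \<sigma>\<^sup>2) powr (- real DIM('a) / 2)"
    define A where "A = (norm (x - a))\<^sup>2 / (2 * \<sigma>\<^sup>2)"
    define B where "B = (norm (x - b))\<^sup>2 / (2 * \<sigma>\<^sup>2)"
    have N0: "N \<ge> 0" by (simp add: N_def)
    have pt: "exp (-A) \<le> exp \<epsilon> * exp (-B) + 1/(1+l) * exp (- l * \<epsilon>) * exp (-(1+l)*A + l*B)"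
      by (rule pt_ineq[OF lp])
    have q: "-(1+l)*A + l*B = l*(1+l)*(norm (a - b))\<^sup>2/(2*\<sigma>\<^sup>2) - (norm (x - m))\<^sup>2 / (2 * \<sigma>\<^sup>2)"
    proof -
      have "-(1+l)*A + l*B = - ((1+l) * (norm (x - a))\<^sup>2 - l * (norm (x - b))\<^sup>2) / (2 * \<sigma>\<^sup>2)"
        unfolding A_def B_def using sp by (simp add: field_simps)
      also have "\<dots> = - ((norm (x - m))\<^sup>2 - l * (1+l) * (norm (a - b))\<^sup>2) / (2 * \<sigma>\<^sup>2)"
        unfolding m_def quad_id ..
      finally show ?thesis by (simp add: diff_divide_distrib minus_divide_left[symmetric])
    qed
    have "1/(1+l) * exp (- l * \<epsilon>) * exp (-(1+l)*A + l*B) = K * exp (- (norm (x - m))\<^sup>2 / (2 * \<sigma>\<^sup>2))"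
      unfolding q K_def by (simp add: mult_exp_exp algebra_simps)
    with pt have "exp (-A) \<le> exp \<epsilon> * exp (-B) + K * exp (- (norm (x - m))\<^sup>2 / (2 * \<sigma>\<^sup>2))" by simp
    then have "N * exp (-A) \<le> N * (exp \<epsilon> * exp (-B) + K * exp (- (norm (x - m))\<^sup>2 / (2 * \<sigma>\<^sup>2)))"
      using N0 by (rule mult_left_mono)
    then show ?thesis unfolding gd_def N_def A_def B_def by (simp add: algebra_simps)
  qed
  have pw2: "ennreal (gd a \<sigma> x) * indicator W x \<le>
      ennreal (exp \<epsilon>) * (ennreal (gd b \<sigma> x) * indicator W x) + ennreal K * ennreal (gd m \<sigma> x)" for x
  proof (cases "x \<in> W")
    case True
    have "ennreal (gd a \<sigma> x) \<le> ennreal (exp \<epsilon> * gd b \<sigma> x + K * gd m \<sigma> x)"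
      using pw ennreal_leI by blast
    also have "\<dots> = ennreal (exp \<epsilon>) * ennreal (gd b \<sigma> x) + ennreal K * ennreal (gd m \<sigma> x)"
      using K0 by (simp add: ennreal_plus ennreal_mult gd_nonneg)
    finally show ?thesis using True by simp
  qed simp
  have Wl: "W \<in> sets lborel" using W by simp
  have "emeasure (gauss_measure a \<sigma>) W = (\<integral>\<^sup>+x. ennreal (gd a \<sigma> x) * indicator W x \<partial>lborel)"
    using sp Wl by (simp add: gauss_eq emeasure_density)
  also have "\<dots> \<le> (\<integral>\<^sup>+x. ennreal (exp \<epsilon>) * (ennreal (gd b \<sigma> x) * indicator W x) + ennreal K * ennreal (gd m \<sigma> x) \<partial>lborel)"
    by (rule nn_integral_mono) (rule pw2)
  also have "\<dots> = ennreal (exp \<epsilon>) * (\<integral>\<^sup>+x. ennreal (gd b \<sigma> x) * indicator W x \<partial>lborel) + ennreal K * (\<integral>\<^sup>+x. ennreal (gd m \<sigma> x) \<partial>lborel)"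
    using W by (simp add: nn_integral_add nn_integral_cmult)
  also have "\<dots> = ennreal (exp \<epsilon>) * emeasure (gauss_measure b \<sigma>) W + ennreal K"
    using sp Wl by (simp add: gauss_eq emeasure_density gd_int)
  finally have le: "emeasure (gauss_measure a \<sigma>) W \<le> ennreal (exp \<epsilon>) * emeasure (gauss_measure b \<sigma>) W + ennreal K" .
  have ea: "emeasure (gauss_measure a \<sigma>) W = ennreal (measure (gauss_measure a \<sigma>) W)"
    using gauss_prob[OF sp] by (intro finite_measure.emeasure_eq_measure prob_space.finite_measure)
  have eb: "emeasure (gauss_measure b \<sigma>) W = ennreal (measure (gauss_measure b \<sigma>) W)"
    using gauss_prob[OF sp] by (intro finite_measure.emeasure_eq_measure prob_space.finite_measure)
  have "ennreal (measure (gauss_measure a \<sigma>) W) \<le> ennreal (exp \<epsilon> * measure (gauss_measure b \<sigma>) W + K)"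
    using le K0 unfolding ea eb by (simp add: ennreal_plus ennreal_mult)
  then show ?thesis unfolding K_def[symmetric] using K0
    by (subst (asm) ennreal_le_iff) (auto intro: add_nonneg_nonneg)
qed

lemma exp_half_le: "exp (1/2::real) \<le> 7/4"
proof (rule ccontr)
  assume "\<not> ?thesis"
  then have h: "exp (1/2::real) > 7/4" by simp
  have "exp (1/2::real) * exp (1/2) = exp 1" by (simp add: mult_exp_exp)
  moreover have "(7/4::real) * (7/4) < exp (1/2) * exp (1/2)"
    using h by (intro mult_strict_mono) auto
  ultimately show False using exp_le by simp
qed

lemma ln_54: "ln (1.25::real) \<ge> 1/5"
proof -
  have "ln (4/5::real) \<le> 4/5 - 1" by (rule ln_le_minus_one) simp
  moreover have "ln (1.25::real) + ln (4/5) = 0"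
  proof -
    have "ln (1.25::real) + ln (4/5) = ln (1.25 * (4/5))" using ln_mult[of "1.25::real" "4/5"] by simp
    then show ?thesis by simp
  qed
  ultimately show ?thesis by simp
qed

lemma numbound:
  fixes \<epsilon> \<delta> Rr D c :: real
  assumes e: "0 < \<epsilon>" "\<epsilon> < 1" and d: "0 < \<delta>" "\<delta> < 1" and R: "Rr > 0" and D: "0 \<le> D" "D \<le> Rr"
    and c: "c = sqrt (2 * ln (1.25 / \<delta>))"
  shows "1/(1 + c\<^sup>2/\<epsilon>) * exp ((c\<^sup>2/\<epsilon>) * (1 + c\<^sup>2/\<epsilon>) * D\<^sup>2 / (2 * (Rr / \<epsilon> * c)\<^sup>2) - (c\<^sup>2/\<epsilon>) * \<epsilon>) \<le> \<delta>"
proof -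
  define s where "s = 2 * ln (1.25 / \<delta>)"
  have lnge: "ln (1.25 / \<delta>) \<ge> ln 1.25" using d by (subst ln_le_cancel_iff) (auto simp: field_simps)
  have s0: "s \<ge> 2/5" using lnge ln_54 by (simp add: s_def)
  have cs: "c\<^sup>2 = s" using s0 by (simp add: c s_def)
  have ex: "exp (s/2) = 1.25 / \<delta>" using d by (simp add: s_def)
  have E: "(c\<^sup>2/\<epsilon>) * (1 + c\<^sup>2/\<epsilon>) * D\<^sup>2 / (2 * (Rr / \<epsilon> * c)\<^sup>2) - (c\<^sup>2/\<epsilon>) * \<epsilon>
      = (\<epsilon> + s) / 2 * (D\<^sup>2 / Rr\<^sup>2) - s"
    using e R s0 unfolding power_mult_distrib cs by (simp add: field_simps power2_eq_square)
  have DR: "D\<^sup>2 / Rr\<^sup>2 \<le> 1" using D R by (simp add: power_mono)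
  have "(\<epsilon> + s) / 2 * (D\<^sup>2 / Rr\<^sup>2) - s \<le> (\<epsilon> + s) / 2 * 1 - s"
    using DR e s0 by (intro diff_right_mono mult_left_mono) auto
  then have "exp ((\<epsilon> + s) / 2 * (D\<^sup>2 / Rr\<^sup>2) - s) \<le> exp (\<epsilon>/2) / exp (s/2)"
    by (simp add: exp_diff[symmetric] field_simps)
  also have "\<dots> \<le> 7/4 / exp (s/2)"
  proof -
    have "exp (\<epsilon>/2) \<le> exp (1/2)" using e by simp
    then have "exp (\<epsilon>/2) \<le> 7/4" using exp_half_le by linarith
    then show ?thesis by (rule divide_right_mono) simp
  qed
  also have "\<dots> = 7/5 * \<delta>" unfolding ex using d by simp
  finally have X: "exp ((\<epsilon> + s) / 2 * (D\<^sup>2 / Rr\<^sup>2) - s) \<le> 7/5 * \<delta>" .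
  have Y: "1/(1 + s/\<epsilon>) \<le> 5/7"
  proof -
    have "s/\<epsilon> \<ge> s" using e s0 by (simp add: field_simps mult_left_le)
    then have "1 + s/\<epsilon> \<ge> 7/5" using s0 by linarith
    then have "1/(1 + s/\<epsilon>) \<le> 1/(7/5)" by (intro divide_left_mono) auto
    then show ?thesis by simp
  qed
  have "1/(1 + s/\<epsilon>) * exp ((\<epsilon> + s) / 2 * (D\<^sup>2 / Rr\<^sup>2) - s) \<le> 5/7 * (7/5 * \<delta>)"
    using X Y e s0 by (intro mult_mono) auto
  moreover have "1/(1 + c\<^sup>2/\<epsilon>) * exp ((c\<^sup>2/\<epsilon>) * (1 + c\<^sup>2/\<epsilon>) * D\<^sup>2 / (2 * (Rr / \<epsilon> * c)\<^sup>2) - (c\<^sup>2/\<epsilon>) * \<epsilon>)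
     = 1/(1 + s/\<epsilon>) * exp ((\<epsilon> + s) / 2 * (D\<^sup>2 / Rr\<^sup>2) - s)"
    unfolding E unfolding cs ..
  ultimately show ?thesis by simp
qed

lemma indist_refl: "\<epsilon> \<ge> 0 \<Longrightarrow> \<delta> \<ge> 0 \<Longrightarrow> indist \<epsilon> \<delta> M M"
  unfolding indist_def
proof (intro ballI conjI)
  fix W assume "\<epsilon> \<ge> 0" "\<delta> \<ge> 0"
  have "measure M W \<le> exp \<epsilon> * measure M W"
  proof -
    have "1 * measure M W \<le> exp \<epsilon> * measure M W"
      using \<open>\<epsilon> \<ge> 0\<close> by (intro mult_right_mono) auto
    then show ?thesis by simp
  qed
  then show "measure M W \<le> exp \<epsilon> * measure M W + \<delta>" "measure M W \<le> exp \<epsilon> * measure M W + \<delta>"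
    using \<open>\<delta> \<ge> 0\<close> by auto
qed

theorem mainTheorem3:
  fixes A :: "'z set \<Rightarrow> 'a::euclidean_space" and \<epsilon> \<delta> :: real and n :: nat
  assumes "0 < \<epsilon>" "\<epsilon> < 1" "0 < \<delta>" "\<delta> < 1"
    and "\<And>R. finite R \<Longrightarrow> bdd_above (range (\<lambda>z. norm (A (R \<union> {z}) - A R)))"
  shows "unlearning A
           (\<lambda>U w S. gauss_measure w (RS A (S - U) / \<epsilon> * sqrt (2 * ln (1.25 / \<delta>))))
           \<epsilon> \<delta> n"
  unfolding unlearning_def
proof (intro allI impI)
  fix R U :: "'z set"
  assume H: "finite R \<and> card R = n \<and> finite U \<and> R \<inter> U = {} \<and> card (U \<union> R) \<le> n + 1"
  define c where "c = sqrt (2 * ln (1.25 / \<delta>))"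
  have ind0: "indist \<epsilon> \<delta> M M" for M :: "'a measure" using assms by (intro indist_refl) auto
  have "card (U \<union> R) = card U + card R" using H by (intro card_Un_disjoint) auto
  then have cU: "card U \<le> 1" using H by simp
  show "indist \<epsilon> \<delta> (gauss_measure (A (R \<union> U)) (RS A ((R \<union> U) - U) / \<epsilon> * c))
                     (gauss_measure (A R) (RS A (R - {}) / \<epsilon> * c))"
  proof (cases "U = {}")
    case True
    then show ?thesis using ind0 by simp
  next
    case False
    then obtain u where u: "U = {u}" using cU H
      by (metis card_1_singletonE card_0_eq le_neq_implies_less less_one)
    have uR: "u \<notin> R" using H u by auto
    have RU: "(R \<union> U) - U = R" using uR u by auto
    define D where "D = norm (A (R \<union> {u}) - A R)"
    have D0: "D \<ge> 0" by (simp add: D_def)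
    have DR: "D \<le> RS A R" unfolding D_def RS_def
      using assms(5)[of R] H by (intro cSUP_upper) auto
    show ?thesis
    proof (cases "RS A R = 0")
      case True
      then have "D = 0" using D0 DR by simp
      then have "A (R \<union> {u}) = A R" by (simp add: D_def)
      moreover have "R - {u} = R" using uR by auto
      ultimately show ?thesis using ind0 u by (simp add: Un_commute)
    next
      case False
      then have Rp: "RS A R > 0" using D0 DR by simp
      have c0: "c > 0" using assms unfolding c_def by (simp add: ln_gt_zero)
      define \<sigma> where "\<sigma> = RS A R / \<epsilon> * c"
      have sp: "\<sigma> > 0" using Rp c0 assms by (simp add: \<sigma>_def)
      define l where "l = c\<^sup>2 / \<epsilon>"
      have lp: "l > 0" using c0 assms by (simp add: l_def)
      have bound: "1/(1+l) * exp (l*(1+l)*D\<^sup>2/(2*\<sigma>\<^sup>2) - l*\<epsilon>) \<le> \<delta>"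
        unfolding l_def \<sigma>_def using numbound[OF assms(1-4) Rp D0 DR c_def]
        by (simp add: mult.assoc)
      have sets: "sets (gauss_measure x \<sigma>) = sets borel" for x :: 'a
        using sp by (simp add: gauss_eq)
      let ?a = "A (R \<union> {u})" and ?b = "A R"
      have Dab: "norm (?a - ?b) = D" "norm (?b - ?a) = D" by (simp_all add: D_def norm_minus_commute)
      have "indist \<epsilon> \<delta> (gauss_measure ?a \<sigma>) (gauss_measure ?b \<sigma>)"
        unfolding indist_def
      proof (intro ballI conjI)
        fix W assume "W \<in> sets (gauss_measure ?a \<sigma>)"
        then have W: "W \<in> sets borel" using sets by simp
        show "measure (gauss_measure ?a \<sigma>) W \<le> exp \<epsilon> * measure (gauss_measure ?b \<sigma>) W + \<delta>"
          using mech[OF sp lp W, of ?a \<epsilon> ?b] bound Dab by simp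
        show "measure (gauss_measure ?b \<sigma>) W \<le> exp \<epsilon> * measure (gauss_measure ?a \<sigma>) W + \<delta>"
          using mech[OF sp lp W, of ?b \<epsilon> ?a] bound Dab by simp
      qed
      then show ?thesis using RU u by (simp add: \<sigma>_def Un_commute)
    qed
  qed
qed

end
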